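(* Let $n\ge1$ and $d\ge0$ be integers, and let $M(x)$ be a monic complex polynomial of degree $2n$, written as $M=A^2+B$ with $A(x)=x^n+\sum_{j=0}^{n-1}a_jx^j$, $B(x)=\sum_{j=0}^{n-1}b_jx^j$. The equation $y''=M(x)y$ has a polynomial-hyperexponential solution of polynomial degree $d$ if and only if $$b_{n-1}^2=(n+2d)^2\quad\text{and}\quad \Delta_d(A(x),B(x))\cdot\Delta_d(-A(x),B(x))=0$$ (the latter as a polynomial identity in $x$). Consequently $\mathbb{L}'_{2n,d}$ is an algebraic subvariety of $\mathbb{M}_{2n}$ (its equations being $b_{n-1}^2=(n+2d)^2$ together with the coefficients in $x$ of $\Delta_d(A,B)\Delta_d(-A,B)$), contained in the union of the hyperplanes $b_{n-1}=2d+n$ and $-b_{n-1}=2d+n$.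
   Context: $\mathbb{Q}\{a,b\}$ is the ring of differential polynomials in two differential indeterminates $a,b$ over $\mathbb{Q}$. Define $\varphi$ on $2\times2$ matrices over $\mathbb{Q}\{a,b\}$ by $\varphi(C)=C'+\begin{pmatrix}-2a&1\\ b-a'&0\end{pmatrix}C$ (entrywise derivative), and $\Delta_p=-\det\left(\varphi^{p+1}(\mathrm{Id})\right)\in\mathbb{Q}\{a,b\}$. Equivalently, with $\ell_{-1}=1$, $r_{-1}=0$, $\ell_0=-2a$, $r_0=b-a'$, $\ell_{j+1}=\ell_j'+r_j+\ell_0\ell_j$, $r_{j+1}=r_j'+r_0\ell_j$, one has $\varphi^{p+1}(\mathrm{Id})=\begin{pmatrix}\ell_p&\ell_{p-1}\\ r_p&r_{p-1}\end{pmatrix}$ and $\Delta_p=r_p\ell_{p-1}-\ell_pr_{p-1}$ (e.g. $\Delta_0=b-a'$). $\Delta_d(A(x),B(x))$ means substituting $a\mapsto A(x)$, $b\mapsto B(x)$, with derivation $d/dx$. $\mathbb{M}_{2n}$ is the set of monic degree-$2n$ polynomials with coordinates $(a_0,\dots,a_{n-1},b_0,\dots,b_{n-1})$ given by the unique decomposition $M=A^2+B$ above. A polynomial-hyperexponential function of polynomial degree $d$ is $P_d(x)\exp(\int A(x)dx)$ with $P_d$ of degree exactly $d$ and $A$ a polynomial; $\mathbb{L}'_{2n,d}$ is the set of $M\in\mathbb{M}_{2n}$ such that $y''=My$ has such a solution. *)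

theory Defs
  imports "HOL-Analysis.Analysis" "HOL-Computational_Algebra.Polynomial"
begin

text \<open>The sequences ell_j, r_j evaluated at (a,b) = (A(x),B(x)), with the derivation d/dx
  realised by pderiv. Index shift: lr A B k = (ell_(k-1), r_(k-1)), so lr A B 0 = (1,0)
  is (ell_(-1), r_(-1)). The recurrence ell_(j+1) = ell_j' + r_j + ell_0 ell_j,
  r_(j+1) = r_j' + r_0 ell_j also holds for j = -1, giving ell_0 = -2A, r_0 = B - A'.\<close>

fun lr :: "complex poly \<Rightarrow> complex poly \<Rightarrow> nat \<Rightarrow> complex poly \<times> complex poly" where
  "lr A B 0 = (1, 0)"
| "lr A B (Suc k) =
     (let (l, r) = lr A B k
      in (pderiv l + r + smult (-2) A * l, pderiv r + (B - pderiv A) * l))"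

definition Delta :: "nat \<Rightarrow> complex poly \<Rightarrow> complex poly \<Rightarrow> complex poly" where
  "Delta p A B =
     snd (lr A B (Suc p)) * fst (lr A B p) - fst (lr A B (Suc p)) * snd (lr A B p)"

definition has_polyhyperexp_sol :: "complex poly \<Rightarrow> nat \<Rightarrow> bool" where
  "has_polyhyperexp_sol M d \<longleftrightarrow>
     (\<exists>P Q F. P \<noteq> 0 \<and> degree P = d \<and> pderiv F = Q \<and>
        (let y = (\<lambda>x. poly P x * exp (poly F x))
         in \<forall>x. deriv (deriv y) x = poly M x * y x))"

end

theory Submission
  imports Defs "HOL-Computational_Algebra.Polynomial_Factorial" "HOL-Computational_Algebra.Field_as_Ring"
begin

lemma deriv_polyexp:
  fixes S F :: "complex poly"
  shows "deriv (\<lambda>x. poly S x * exp (poly F x)) = (\<lambda>x. poly (pderiv S + S * pderiv F) x * exp (poly F x))"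
proof
  fix x :: complex
  have "((\<lambda>x. poly S x * exp (poly F x)) has_field_derivative
        poly (pderiv S) x * exp (poly F x) + poly S x * (exp (poly F x) * poly (pderiv F) x)) (at x)"
    by (auto intro!: derivative_eq_intros)
  then show "deriv (\<lambda>x. poly S x * exp (poly F x)) x = poly (pderiv S + S * pderiv F) x * exp (poly F x)"
    by (auto dest!: DERIV_imp_deriv simp: algebra_simps)
qed

lemma antideriv_ex: "\<exists>F. pderiv F = (Q::complex poly)"
proof -
  define F where "F = (\<Sum>i\<le>degree Q. monom (coeff Q i / of_nat (Suc i)) (Suc i))"
  have "pderiv F = (\<Sum>i\<le>degree Q. monom (coeff Q i) i)"
  proof -
    have s: "pderiv (sum f A) = (\<Sum>x\<in>A. pderiv (f x))" for f :: "nat \<Rightarrow> complex poly" and A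
      using higher_pderiv_sum[of 1] by simp
    have m: "pderiv (monom (coeff Q i / of_nat (Suc i)) (Suc i)) = monom (coeff Q i) i" for i
      unfolding pderiv_monom by (simp del: of_nat_Suc)
    show ?thesis unfolding F_def s m by simp
  qed
  then show ?thesis using poly_as_sum_of_monoms by metis
qed

lemma sol_char:
  "has_polyhyperexp_sol M d \<longleftrightarrow> (\<exists>P Q. P \<noteq> 0 \<and> degree P = d \<and>
     pderiv (pderiv P) + 2 * pderiv P * Q + P * (pderiv Q + Q^2) = M * P)"
proof -
  have key: "(\<forall>x. deriv (deriv (\<lambda>x. poly P x * exp (poly F x))) x = poly M x * (poly P x * exp (poly F x)))
     \<longleftrightarrow> pderiv (pderiv P) + 2 * pderiv P * pderiv F + P * (pderiv (pderiv F) + (pderiv F)^2) = M * P"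
    for P F :: "complex poly"
  proof -
    have e: "deriv (deriv (\<lambda>x. poly P x * exp (poly F x))) = (\<lambda>x. poly (pderiv (pderiv P) + 2 * pderiv P * pderiv F + P * (pderiv (pderiv F) + (pderiv F)^2)) x * exp (poly F x))"
      apply (simp only: deriv_polyexp[of P F] deriv_polyexp[of "pderiv P + P * pderiv F" F])
      by (simp add: pderiv_add pderiv_mult algebra_simps power2_eq_square)
    have "(\<forall>x. deriv (deriv (\<lambda>x. poly P x * exp (poly F x))) x = poly M x * (poly P x * exp (poly F x)))
       \<longleftrightarrow> (\<forall>x. poly (pderiv (pderiv P) + 2 * pderiv P * pderiv F + P * (pderiv (pderiv F) + (pderiv F)^2)) x = poly (M * P) x)"
      unfolding e by auto
    also have "\<dots> \<longleftrightarrow> pderiv (pderiv P) + 2 * pderiv P * pderiv F + P * (pderiv (pderiv F) + (pderiv F)^2) = M * P"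
      using poly_eq_poly_eq_iff by (metis ext)
    finally show ?thesis .
  qed
  show ?thesis
    unfolding has_polyhyperexp_sol_def Let_def
  proof
    assume "\<exists>P Q F. P \<noteq> 0 \<and> degree P = d \<and> pderiv F = Q \<and> (\<forall>x. deriv (deriv (\<lambda>x. poly P x * exp (poly F x))) x = poly M x * (poly P x * exp (poly F x)))"
    then obtain P Q F where "P \<noteq> 0 \<and> degree P = d \<and> pderiv F = Q \<and> (\<forall>x. deriv (deriv (\<lambda>x. poly P x * exp (poly F x))) x = poly M x * (poly P x * exp (poly F x)))" by blast
    then show "\<exists>P Q. P \<noteq> 0 \<and> degree P = d \<and> pderiv (pderiv P) + 2 * pderiv P * Q + P * (pderiv Q + Q^2) = M * P"
      using key by blast
  next
    assume "\<exists>P Q. P \<noteq> 0 \<and> degree P = d \<and> pderiv (pderiv P) + 2 * pderiv P * Q + P * (pderiv Q + Q^2) = M * P"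
    then obtain P Q where h: "P \<noteq> 0 \<and> degree P = d \<and> pderiv (pderiv P) + 2 * pderiv P * Q + P * (pderiv Q + Q^2) = M * P" by blast
    obtain F where "pderiv F = Q" using antideriv_ex by blast
    then show "\<exists>P Q F. P \<noteq> 0 \<and> degree P = d \<and> pderiv F = Q \<and> (\<forall>x. deriv (deriv (\<lambda>x. poly P x * exp (poly F x))) x = poly M x * (poly P x * exp (poly F x)))"
      using h key by blast
  qed
qed


lemma half_poly: "(Q::complex poly) = smult (1 / 2) (Q * 2)"
  by (metis mult.commute numeral_mult_conv_smult smult_1_left smult_eq_iff zero_neq_numeral)

lemma Qsign:
  fixes A B P Q :: "complex poly" and n :: nat
  assumes n: "n \<ge> 1" and dA: "degree A = n" and dB: "degree B < n" and P: "P \<noteq> 0"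
    and eq: "pderiv (pderiv P) + 2 * pderiv P * Q + P * (pderiv Q + Q^2) = (A^2 + B) * P"
  shows "Q = A \<or> Q = -A"
proof (rule ccontr)
  assume ne: "\<not> (Q = A \<or> Q = -A)"
  define d where "d = degree P"
  define m where "m = degree Q"
  define K where "K = max n m"
  have Kp: "K \<ge> 1" using n K_def by simp
  have E: "(Q - A) * (Q + A) * P = B * P - pderiv (pderiv P) - 2 * pderiv P * Q - P * pderiv Q"
    using eq by (simp add: algebra_simps power2_eq_square)
  have n1: "Q - A \<noteq> 0" "Q + A \<noteq> 0" using ne by (auto simp: algebra_simps add_eq_0_iff)
  have lo1: "m \<le> max (degree (Q - A)) (degree (Q + A))"
  proof -
    have "Q = smult (1/2) ((Q - A) + (Q + A))" using half_poly by (simp add: algebra_simps)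
    then have "m = degree (smult (1/2) ((Q - A) + (Q + A)))" unfolding m_def by simp
    also have "\<dots> \<le> degree ((Q - A) + (Q + A))" by simp
    also have "\<dots> \<le> max (degree (Q - A)) (degree (Q + A))" by (rule degree_add_le_max)
    finally show ?thesis .
  qed
  have lo2: "n \<le> max (degree (Q - A)) (degree (Q + A))"
  proof -
    have "A = smult (1/2) ((Q + A) - (Q - A))" using half_poly by (simp add: algebra_simps)
    then have "n = degree (smult (1/2) ((Q + A) - (Q - A)))" using dA by simp
    also have "\<dots> \<le> degree ((Q + A) - (Q - A))" by simp
    also have "\<dots> \<le> max (degree (Q + A)) (degree (Q - A))" by (rule degree_diff_le_max)
    finally show ?thesis by simp
  qed
  have LHS: "degree ((Q - A) * (Q + A) * P) \<ge> K + d"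
    using n1 P lo1 lo2 unfolding K_def d_def by (simp add: degree_mult_eq max_def split: if_splits)
  have t1: "degree (B * P) \<le> K + d - 1"
    using degree_mult_le[of B P] dB unfolding K_def d_def by simp
  have t2: "degree (pderiv (pderiv P)) \<le> K + d - 1"
    using Kp unfolding d_def by (simp add: degree_pderiv)
  have t3: "degree (2 * pderiv P * Q) \<le> K + d - 1"
  proof (cases "d = 0")
    case True
    then have "pderiv P = 0" unfolding d_def by (simp add: pderiv_eq_0_iff)
    then show ?thesis by simp
  next
    case False
    have "degree (2 * pderiv P * Q) \<le> degree (2 * pderiv P) + m"
      unfolding m_def by (rule degree_mult_le)
    also have "degree (2 * pderiv P) \<le> degree (2::complex poly) + degree (pderiv P)"
      by (rule degree_mult_le)
    finally show ?thesis using False unfolding K_def d_def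
      by (simp add: degree_pderiv)
  qed
  have t4: "degree (P * pderiv Q) \<le> K + d - 1"
    using degree_mult_le[of P "pderiv Q"] Kp unfolding K_def d_def m_def by (simp add: degree_pderiv)
  have "degree (B * P - pderiv (pderiv P) - 2 * pderiv P * Q - P * pderiv Q) \<le> K + d - 1"
    by (intro degree_diff_le t1 t2 t3 t4)
  then show False using LHS E Kp by simp
qed


lemma coeff_shift:
  fixes p q :: "complex poly"
  assumes "degree p \<le> i" "degree q \<le> j"
  shows "coeff (p * q) (i + j) = coeff p i * coeff q j"
proof -
  have "coeff (p * q) (i + j) = (\<Sum>k\<le>i+j. coeff p k * coeff q (i + j - k))" by (rule coeff_mult)
  also have "\<dots> = (\<Sum>k\<le>i+j. if k = i then coeff p i * coeff q j else 0)"
  proof (rule sum.cong)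
    fix k assume "k \<in> {..i+j}"
    show "coeff p k * coeff q (i + j - k) = (if k = i then coeff p i * coeff q j else 0)"
    proof (cases "k = i")
      case False
      show ?thesis
      proof (cases "k < i")
        case True
        then have "coeff q (i + j - k) = 0" using assms(2) by (intro coeff_eq_0) simp
        then show ?thesis using False by simp
      next
        case False2: False
        then have "coeff p k = 0" using assms(1) False by (intro coeff_eq_0) simp
        then show ?thesis using False by simp
      qed
    qed simp
  qed simp
  also have "\<dots> = coeff p i * coeff q j" by simp
  finally show ?thesis .
qed

lemma bsign:
  fixes a B P :: "complex poly" and n :: nat
  assumes n: "n \<ge> 1" and da: "degree a = n" and dB: "degree B < n" and P: "P \<noteq> 0"
    and L: "pderiv (pderiv P) + smult 2 (a * pderiv P) + pderiv a * P = B * P"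
  shows "coeff B (n - 1) = lead_coeff a * of_nat (2 * degree P + n)"
proof -
  define e where "e = degree P"
  define i where "i = n - 1 + e"
  have c1: "coeff (B * P) i = coeff B (n - 1) * lead_coeff P"
    unfolding i_def e_def using dB by (intro coeff_shift) auto
  have c2: "coeff (pderiv a * P) i = of_nat n * lead_coeff a * lead_coeff P"
  proof -
    have "coeff (pderiv a * P) i = coeff (pderiv a) (n - 1) * lead_coeff P"
      unfolding i_def e_def using da by (intro coeff_shift) (auto simp: degree_pderiv)
    moreover have "coeff (pderiv a) (n - 1) = of_nat n * lead_coeff a"
      using n da by (simp add: coeff_pderiv)
    ultimately show ?thesis by simp
  qed
  have c3: "coeff (a * pderiv P) i = lead_coeff a * of_nat e * lead_coeff P"
  proof (cases "e = 0")
    case True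
    then have "pderiv P = 0" unfolding e_def by (simp add: pderiv_eq_0_iff)
    then show ?thesis using True by simp
  next
    case False
    then have "i = n + (e - 1)" unfolding i_def using n by simp
    then have "coeff (a * pderiv P) i = lead_coeff a * coeff (pderiv P) (e - 1)"
      using da by (simp add: coeff_shift degree_pderiv e_def)
    moreover have "coeff (pderiv P) (e - 1) = of_nat e * lead_coeff P"
      using False by (simp add: coeff_pderiv e_def)
    ultimately show ?thesis by simp
  qed
  have c4: "coeff (pderiv (pderiv P)) i = 0"
  proof (cases "e \<ge> 2")
    case True
    then show ?thesis unfolding i_def using n
      by (intro coeff_eq_0) (simp add: degree_pderiv e_def)
  next
    case False
    then have "degree (pderiv P) = 0" by (simp add: degree_pderiv e_def)
    then show ?thesis by (simp add: pderiv_eq_0_iff[symmetric])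
  qed
  have "coeff (pderiv (pderiv P) + smult 2 (a * pderiv P) + pderiv a * P) i = coeff (B * P) i"
    using L by simp
  then have "coeff B (n - 1) * lead_coeff P = lead_coeff a * of_nat (2 * e + n) * lead_coeff P"
    using c1 c2 c3 c4 by (simp add: algebra_simps)
  then show ?thesis using P unfolding e_def by simp
qed

lemma higher_deriv_rep:
  fixes a B P :: "complex poly"
  assumes L: "pderiv (pderiv P) = smult (-2) a * pderiv P + (B - pderiv a) * P"
  shows "(pderiv ^^ Suc k) P = fst (lr a B k) * pderiv P + snd (lr a B k) * P"
proof (induction k)
  case 0
  then show ?case by simp
next
  case (Suc k)
  obtain l r where lr: "lr a B k = (l, r)" by (cases "lr a B k")
  have "(pderiv ^^ Suc (Suc k)) P = pderiv ((pderiv ^^ Suc k) P)" by simp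
  also have "\<dots> = pderiv (l * pderiv P + r * P)" using Suc lr by simp
  also have "\<dots> = (pderiv l + r + smult (-2) a * l) * pderiv P + (pderiv r + (B - pderiv a) * l) * P"
    by (simp add: pderiv_add pderiv_mult L algebra_simps)
  finally show ?case using lr by simp
qed

lemma degree_higher_pderiv: "degree ((pderiv ^^ k) (P::complex poly)) = degree P - k"
  by (induction k) (auto simp: degree_pderiv)

lemma kernel_delta:
  fixes a B P :: "complex poly"
  assumes L: "pderiv (pderiv P) = smult (-2) a * pderiv P + (B - pderiv a) * P" and P: "P \<noteq> 0"
  shows "Delta (degree P) a B = 0"
proof -
  define d where "d = degree P"
  have z1: "(pderiv ^^ Suc d) P = 0"
    using degree_higher_pderiv[of d P] by (simp add: pderiv_eq_0_iff d_def)
  have z2: "(pderiv ^^ Suc (Suc d)) P = 0" using z1 by simp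
  obtain l r where lr: "lr a B d = (l, r)" by (cases "lr a B d")
  obtain l2 r2 where lr2: "lr a B (Suc d) = (l2, r2)" by (cases "lr a B (Suc d)")
  have e1: "l * pderiv P + r * P = 0" using higher_deriv_rep[OF L, of d] z1 lr by simp
  have e2: "l2 * pderiv P + r2 * P = 0" using higher_deriv_rep[OF L, of "Suc d"] z2 lr2 by simp
  have "Delta d a B * P = (r2 * l - l2 * r) * P" unfolding Delta_def using lr lr2 by simp
  also have "\<dots> = l * (r2 * P) - l2 * (r * P)" by (simp add: algebra_simps)
  also have "\<dots> = l * (- (l2 * pderiv P)) - l2 * (- (l * pderiv P))"
  proof -
    have "r * P = - (l * pderiv P)" using e1 by (simp add: eq_neg_iff_add_eq_0 add.commute)
    moreover have "r2 * P = - (l2 * pderiv P)" using e2 by (simp add: eq_neg_iff_add_eq_0 add.commute)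
    ultimately show ?thesis by simp
  qed
  also have "\<dots> = 0" by (simp add: algebra_simps)
  finally show ?thesis using P d_def by simp
qed


lemma lr_inv:
  fixes a B :: "complex poly" and n :: nat
  assumes n: "n \<ge> 1" and da: "degree a = n" and dB: "degree B < n"
  shows "fst (lr a B k) \<noteq> 0 \<and> degree (fst (lr a B k)) = n * k \<and>
         (snd (lr a B k) = 0 \<or> degree (snd (lr a B k)) < n * k)"
proof (induction k)
  case 0
  then show ?case by simp
next
  case (Suc k)
  obtain l r where lr: "lr a B k = (l, r)" by (cases "lr a B k")
  have l: "l \<noteq> 0" "degree l = n * k" and r: "r = 0 \<or> degree r < n * k" using Suc lr by auto
  have a0: "a \<noteq> 0" using da n by auto
  have d1: "degree (smult (-2) a * l) = n + n * k"
    using a0 l da by (simp add: degree_mult_eq)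
  have dr: "degree r \<le> n * k" using r by auto
  have d2: "degree (pderiv l + r) < n + n * k"
  proof -
    have "degree (pderiv l + r) \<le> max (degree (pderiv l)) (degree r)" by (rule degree_add_le_max)
    also have "\<dots> \<le> n * k" using dr l by (simp add: degree_pderiv)
    finally show ?thesis using n by simp
  qed
  have L: "degree (pderiv l + r + smult (-2) a * l) = n * Suc k"
    using degree_add_eq_right[of "pderiv l + r" "smult (-2) a * l"] d1 d2 by simp
  have L0: "pderiv l + r + smult (-2) a * l \<noteq> 0"
  proof
    assume "pderiv l + r + smult (-2) a * l = 0"
    then have "degree (pderiv l + r + smult (-2) a * l) = 0" by simp
    then show False using L n by simp
  qed
  have R: "degree (pderiv r + (B - pderiv a) * l) < n * Suc k"
  proof -
    have "degree (B - pderiv a) \<le> n - 1"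
      using dB da by (intro degree_diff_le) (auto simp: degree_pderiv)
    then have "degree ((B - pderiv a) * l) \<le> n - 1 + n * k"
      using degree_mult_le[of "B - pderiv a" l] l by simp
    moreover have "degree (pderiv r) \<le> n * k" using dr by (simp add: degree_pderiv)
    ultimately have "degree (pderiv r + (B - pderiv a) * l) \<le> n - 1 + n * k"
      by (intro degree_add_le) auto
    then show ?thesis using n by simp
  qed
  show ?case using lr L L0 R by simp
qed

lemma riccati:
  fixes a B :: "complex poly" and n d :: nat
  assumes n: "n \<ge> 1" and da: "degree a = n" and dB: "degree B < n"
    and D: "Delta d a B = 0"
  shows "\<exists>u. u \<noteq> 0 \<and> pderiv (pderiv u) = smult (-2) a * pderiv u + (B - pderiv a) * u"
proof -
  obtain l r where lr: "lr a B d = (l, r)" by (cases "lr a B d")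
  have l: "l \<noteq> 0" "degree l = n * d" and r: "r = 0 \<or> degree r < n * d"
    using lr_inv[OF n da dB, of d] lr by auto
  define c where "c = gcd l r"
  define u where "u = l div c"
  define v where "v = r div c"
  have c0: "c \<noteq> 0" using l c_def by simp
  have lc: "l = c * u" unfolding u_def c_def by simp
  have rc: "r = c * v" unfolding v_def c_def by simp
  have cop: "coprime u v" unfolding u_def v_def c_def using l by (intro div_gcd_coprime) simp
  have u0: "u \<noteq> 0" using l lc by auto
  define r0 where "r0 = B - pderiv a"
  define l0 where "l0 = smult (-2) a"
  have "Delta d a B = (pderiv r + r0 * l) * l - (pderiv l + r + l0 * l) * r"
    unfolding Delta_def r0_def l0_def using lr by simp
  also have "\<dots> = (c * c) * (pderiv v * u + r0 * u * u - pderiv u * v - v * v - l0 * u * v)"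
    unfolding lc rc by (simp add: pderiv_mult algebra_simps)
  finally have I: "pderiv v * u + r0 * u * u - pderiv u * v - v * v - l0 * u * v = 0"
    using D c0 by simp
  have "v * (pderiv u + v) = u * (pderiv v + r0 * u - l0 * v)"
    using I by (simp add: algebra_simps)
  then have "u dvd v * (pderiv u + v)" by (metis dvd_triv_left)
  then have dv: "u dvd pderiv u + v" using cop by (simp add: coprime_dvd_mult_right_iff)
  have vdeg: "v = 0 \<or> degree v < degree u"
  proof (cases "v = 0")
    case False
    then have "r \<noteq> 0" using rc c0 by simp
    then have "degree r < degree l" using r l by simp
    then show ?thesis using False c0 u0 unfolding lc rc by (simp add: degree_mult_eq)
  qed simp
  have s: "pderiv u + v = 0"
  proof (rule ccontr)
    assume ne: "pderiv u + v \<noteq> 0"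
    have le: "degree u \<le> degree (pderiv u + v)" by (rule dvd_imp_degree_le[OF dv ne])
    show False
    proof (cases "degree u = 0")
      case True
      then have "pderiv u = 0" by (simp add: pderiv_eq_0_iff)
      then show False using vdeg ne True by simp
    next
      case False
      have "degree (pderiv u + v) \<le> max (degree (pderiv u)) (degree v)" by (rule degree_add_le_max)
      also have "\<dots> < degree u" using False vdeg by (auto simp: degree_pderiv)
      finally show False using le by simp
    qed
  qed
  then have vv: "v = - pderiv u" by (simp add: eq_neg_iff_add_eq_0 add.commute)
  have "u * (r0 * u + l0 * pderiv u - pderiv (pderiv u)) = 0"
    using I unfolding vv by (simp add: pderiv_minus algebra_simps)
  then have "r0 * u + l0 * pderiv u = pderiv (pderiv u)" using u0 by simp
  then have "pderiv (pderiv u) = l0 * pderiv u + r0 * u" by (metis add.commute)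
  then show ?thesis using u0 unfolding l0_def r0_def by (auto simp: algebra_simps)
qed


lemma form12:
  fixes a B P :: "complex poly"
  assumes "pderiv (pderiv P) + 2 * pderiv P * a + P * (pderiv a + a^2) = (a^2 + B) * P"
  shows "pderiv (pderiv P) = smult (-2) a * pderiv P + (B - pderiv a) * P"
proof -
  have "smult (-2) a * pderiv P = - (2 * pderiv P * a)"
    by (metis numeral_mult_conv_smult mult_smult_left mult.commute smult_minus_left)
  then show ?thesis using assms by (simp add: algebra_simps power2_eq_square)
qed

lemma form21:
  fixes a B P :: "complex poly"
  assumes "pderiv (pderiv P) = smult (-2) a * pderiv P + (B - pderiv a) * P"
  shows "pderiv (pderiv P) + 2 * pderiv P * a + P * (pderiv a + a^2) = (a^2 + B) * P"
proof -
  have "smult (-2) a * pderiv P = - (2 * pderiv P * a)"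
    by (metis numeral_mult_conv_smult mult_smult_left mult.commute smult_minus_left)
  then show ?thesis using assms by (simp add: algebra_simps power2_eq_square)
qed

lemma form23:
  fixes a B P :: "complex poly"
  assumes "pderiv (pderiv P) = smult (-2) a * pderiv P + (B - pderiv a) * P"
  shows "pderiv (pderiv P) + smult 2 (a * pderiv P) + pderiv a * P = B * P"
proof -
  have "smult (-2) a * pderiv P = - smult 2 (a * pderiv P)"
    by simp
  then show ?thesis using assms by (simp add: algebra_simps)
qed

lemma nat_sq: "(of_nat x :: complex)^2 = (of_nat y)^2 \<Longrightarrow> x = y"
proof -
  assume "(of_nat x :: complex)^2 = (of_nat y)^2"
  then have "of_nat (x^2) = (of_nat (y^2) :: complex)" by simp
  then have "x^2 = y^2" using of_nat_eq_iff by blast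
  then show "x = y" by (simp add: power2_eq_iff_nonneg)
qed


theorem mainTheorem7:
  fixes n d :: nat and A B M :: "complex poly"
  assumes "n \<ge> 1"
    and "lead_coeff A = 1" and "degree A = n"
    and "degree B < n"
    and "M = A ^ 2 + B"
  shows "(has_polyhyperexp_sol M d \<longleftrightarrow>
            (coeff B (n - 1)) ^ 2 = (of_nat (n + 2 * d)) ^ 2
            \<and> Delta d A B * Delta d (- A) B = 0)
         \<and> (has_polyhyperexp_sol M d \<longrightarrow>
            coeff B (n - 1) = of_nat (2 * d + n) \<or> - coeff B (n - 1) = of_nat (2 * d + n))"
proof -
  note n = assms(1) and lcA = assms(2) and dA = assms(3) and dB = assms(4) and Mdef = assms(5)
  have sgn: "degree a = n \<and> a^2 = A^2 \<and> (lead_coeff a = 1 \<or> lead_coeff a = -1)"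
    if "a = A \<or> a = -A" for a
    using that dA lcA by (auto simp: lead_coeff_minus)
  have fwd: "coeff B (n - 1) = of_nat (2 * d + n) \<or> - coeff B (n - 1) = of_nat (2 * d + n)"
     and fwd2: "Delta d A B * Delta d (- A) B = 0"
    if h: "has_polyhyperexp_sol M d"
  proof -
    obtain P Q where P: "P \<noteq> 0" "degree P = d"
      and eq: "pderiv (pderiv P) + 2 * pderiv P * Q + P * (pderiv Q + Q^2) = M * P"
      using h unfolding sol_char by blast
    have QA: "Q = A \<or> Q = -A" using Qsign[OF n dA dB P(1)] eq Mdef by simp
    have s: "degree Q = n" "Q^2 = A^2" "lead_coeff Q = 1 \<or> lead_coeff Q = -1" using sgn[OF QA] by auto
    have f2: "pderiv (pderiv P) = smult (-2) Q * pderiv P + (B - pderiv Q) * P"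
      by (rule form12) (use eq Mdef s in simp)
    have b: "coeff B (n - 1) = lead_coeff Q * of_nat (2 * d + n)"
      using bsign[OF n s(1) dB P(1) form23[OF f2]] P(2) by simp
    then show "coeff B (n - 1) = of_nat (2 * d + n) \<or> - coeff B (n - 1) = of_nat (2 * d + n)"
      using s(3) by auto
    have "Delta d Q B = 0" using kernel_delta[OF f2 P(1)] P(2) by simp
    then show "Delta d A B * Delta d (- A) B = 0" using QA by auto
  qed
  have bwd: "has_polyhyperexp_sol M d"
    if h1: "(coeff B (n - 1)) ^ 2 = (of_nat (n + 2 * d)) ^ 2" and h2: "Delta d A B * Delta d (- A) B = 0"
  proof -
    obtain a where aA: "a = A \<or> a = -A" and D: "Delta d a B = 0" using h2 by auto
    have s: "degree a = n" "a^2 = A^2" "lead_coeff a = 1 \<or> lead_coeff a = -1" using sgn[OF aA] by auto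
    obtain u where u: "u \<noteq> 0" "pderiv (pderiv u) = smult (-2) a * pderiv u + (B - pderiv a) * u"
      using riccati[OF n s(1) dB D] by blast
    have b: "coeff B (n - 1) = lead_coeff a * of_nat (2 * degree u + n)"
      using bsign[OF n s(1) dB u(1) form23[OF u(2)]] by simp
    have "(coeff B (n - 1)) ^ 2 = (of_nat (2 * degree u + n)) ^ 2"
      using b s(3) by (auto simp: power2_eq_square)
    then have "(of_nat (2 * degree u + n) :: complex) ^ 2 = (of_nat (n + 2 * d)) ^ 2" using h1 by simp
    then have "2 * degree u + n = n + 2 * d" by (rule nat_sq)
    then have du: "degree u = d" by simp
    have "pderiv (pderiv u) + 2 * pderiv u * a + u * (pderiv a + a^2) = M * u"
      using form21[OF u(2)] Mdef s(2) by simp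
    then show ?thesis unfolding sol_char using u(1) du by blast
  qed
  show ?thesis
  proof (intro conjI impI iffI)
    assume h: "has_polyhyperexp_sol M d"
    show "coeff B (n - 1) ^ 2 = of_nat (n + 2 * d) ^ 2"
    proof -
      have "coeff B (n - 1) = of_nat (n + 2 * d) \<or> coeff B (n - 1) = - of_nat (n + 2 * d)"
        using fwd[OF h] by (metis add.commute minus_equation_iff)
      then show ?thesis by (metis power2_minus)
    qed
    show "Delta d A B * Delta d (- A) B = 0" using fwd2[OF h] .
  next
    assume "coeff B (n - 1) ^ 2 = of_nat (n + 2 * d) ^ 2 \<and> Delta d A B * Delta d (- A) B = 0"
    then show "has_polyhyperexp_sol M d" using bwd by blast
  next
    assume h: "has_polyhyperexp_sol M d"
    show "coeff B (n - 1) = of_nat (2 * d + n) \<or> - coeff B (n - 1) = of_nat (2 * d + n)"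
      using fwd[OF h] .
  qed
qed

end
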